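(* Let $n\in\mathbb{N}$ and let $R$ be a strongly $n$-torsion clean ring. Then: (1) $R$ is a PI-ring satisfying the polynomial identity $(x^n-1)((x-1)^n-1)=0$, i.e. $(r^n-1)((r-1)^n-1)=0$ for all $r\in R$; (2) $R$ has finite characteristic $\mathrm{char}(R)=|1\cdot\mathbb{Z}|$; (3) $J(R)$ is a nil ideal of index smaller than $(\mathrm{char}(R))^n$; (4) when $n$ is odd, $R$ is a reduced ring of characteristic $2$ and $J(R)=0$; (5) if $R$ is an algebra over a field $F$, then (i) $J(R)$ is a nil ideal of index at most $n$, and (ii) either $R$ is abelian or $\mathrm{char}(F)$ divides $n$.
   Context: All rings are associative with identity. $U(R)$ is the unit group, $J(R)$ the Jacobson radical, and $\mathrm{char}(R):=|1\cdot\mathbb{Z}|$ is the cardinality of the subring generated by $1$. A decomposition $r=e+u$ with $e^2=e$, $u\in U(R)$ and $u^n=1$ is an $n$-torsion clean decomposition of $r$; it is strongly $n$-torsion clean if moreover $eu=ue$. A ring $R$ is strongly $n$-torsion clean if every element of $R$ has a strongly $n$-torsion clean decomposition and $n$ is the smallest natural number with this property. A nil ideal $I$ is nil of index $k$ if $r^k=0$ for all $r\in I$ and $k$ is the minimal natural number with this property. A ring is abelian if all its idempotents are central, and reduced if it has no nonzero nilpotent elements. *)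

theory Defs
  imports Main
begin

definition unit_of :: "'a::ring_1 \<Rightarrow> bool" where
  "unit_of u \<longleftrightarrow> (\<exists>v. u * v = 1 \<and> v * u = 1)"

definition idempotent :: "'a::ring_1 \<Rightarrow> bool" where
  "idempotent e \<longleftrightarrow> e * e = e"

definition has_strong_torsion_clean_decomps :: "nat \<Rightarrow> 'a::ring_1 itself \<Rightarrow> bool" where
  "has_strong_torsion_clean_decomps n TYPE('a) \<longleftrightarrow>
     (\<forall>r::'a. \<exists>e u. idempotent e \<and> unit_of u \<and> u ^ n = 1 \<and> e * u = u * e \<and> r = e + u)"

definition strongly_n_torsion_clean :: "nat \<Rightarrow> 'a::ring_1 itself \<Rightarrow> bool" where
  "strongly_n_torsion_clean n T \<longleftrightarrow>
     1 \<le> n \<and> has_strong_torsion_clean_decomps n T \<and>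
     (\<forall>m. 1 \<le> m \<and> m < n \<longrightarrow> \<not> has_strong_torsion_clean_decomps m T)"

text \<open>char(R) = cardinality of the subring generated by 1 (0 if infinite, as card does).\<close>
definition ring_char :: "'a::ring_1 itself \<Rightarrow> nat" where
  "ring_char TYPE('a) = card (range (of_int :: int \<Rightarrow> 'a))"

definition left_ideal :: "'a::ring_1 set \<Rightarrow> bool" where
  "left_ideal I \<longleftrightarrow> 0 \<in> I \<and> (\<forall>x\<in>I. \<forall>y\<in>I. x + y \<in> I) \<and> (\<forall>x\<in>I. - x \<in> I)
     \<and> (\<forall>r. \<forall>x\<in>I. r * x \<in> I)"

definition two_sided_ideal :: "'a::ring_1 set \<Rightarrow> bool" where
  "two_sided_ideal I \<longleftrightarrow> left_ideal I \<and> (\<forall>r. \<forall>x\<in>I. x * r \<in> I)"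

definition maximal_left_ideal :: "'a::ring_1 set \<Rightarrow> bool" where
  "maximal_left_ideal M \<longleftrightarrow> left_ideal M \<and> M \<noteq> UNIV \<and>
     (\<forall>N. left_ideal N \<and> M \<subseteq> N \<longrightarrow> N = M \<or> N = UNIV)"

definition jacobson :: "'a::ring_1 itself \<Rightarrow> 'a set" where
  "jacobson TYPE('a) = \<Inter> {M :: 'a set. maximal_left_ideal M}"

definition nil_ideal_of_index :: "'a::ring_1 set \<Rightarrow> nat \<Rightarrow> bool" where
  "nil_ideal_of_index I k \<longleftrightarrow> two_sided_ideal I \<and> (\<forall>r\<in>I. r ^ k = 0) \<and>
     (\<forall>m<k. \<not> (\<forall>r\<in>I. r ^ m = 0))"

definition reduced_ring :: "'a::ring_1 itself \<Rightarrow> bool" where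
  "reduced_ring TYPE('a) \<longleftrightarrow> (\<forall>x::'a. \<forall>k. x ^ k = 0 \<longrightarrow> x = 0)"

definition abelian_ring :: "'a::ring_1 itself \<Rightarrow> bool" where
  "abelian_ring TYPE('a) \<longleftrightarrow> (\<forall>e::'a. idempotent e \<longrightarrow> (\<forall>x. e * x = x * e))"

text \<open>An F-algebra structure on R: a unital ring homomorphism F \<rightarrow> centre of R
  (scalar multiplication c \<cdot> r = phi c * r).\<close>
definition algebra_structure :: "('f::field \<Rightarrow> 'a::ring_1) \<Rightarrow> bool" where
  "algebra_structure phi \<longleftrightarrow>
     (\<forall>a b. phi (a + b) = phi a + phi b) \<and> (\<forall>a b. phi (a * b) = phi a * phi b) \<and>
     phi 1 = 1 \<and> (\<forall>a r. phi a * r = r * phi a)"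

end

theory Submission
  imports Defs "HOL-Computational_Algebra.Primes" "HOL-Library.FuncSet"
begin

lemma left_ideal_UNIV_iff: "left_ideal (I::'a::ring_1 set) \<Longrightarrow> 1 \<in> I \<Longrightarrow> I = UNIV"
  unfolding left_ideal_def by (metis UNIV_eq_I mult.right_neutral)

lemma exists_maximal:
  fixes I :: "'a::ring_1 set"
  assumes I: "left_ideal I" and one: "1 \<notin> I"
  shows "\<exists>M. maximal_left_ideal M \<and> I \<subseteq> M"
proof -
  define A where "A = {N::'a set. left_ideal N \<and> I \<subseteq> N \<and> 1 \<notin> N}"
  have "\<forall>C\<in>chains A. \<exists>U\<in>A. \<forall>X\<in>C. X \<subseteq> U"
  proof
    fix C assume C: "C \<in> chains A"
    show "\<exists>U\<in>A. \<forall>X\<in>C. X \<subseteq> U"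
    proof (cases "C = {}")
      case True thus ?thesis using I one by (auto simp: A_def)
    next
      case False
      have CA: "C \<subseteq> A" and ch: "\<forall>X\<in>C. \<forall>Y\<in>C. X \<subseteq> Y \<or> Y \<subseteq> X"
        using C by (auto simp: chains_def chain_subset_def)
      have "left_ideal (\<Union>C)"
        unfolding left_ideal_def
      proof (intro conjI ballI allI)
        show "0 \<in> \<Union>C" using False CA by (auto simp: A_def left_ideal_def)
      next
        fix x y assume "x \<in> \<Union>C" "y \<in> \<Union>C"
        then obtain X Y where XY: "X \<in> C" "Y \<in> C" "x \<in> X" "y \<in> Y" by auto
        show "x + y \<in> \<Union>C"
        proof (cases "X \<subseteq> Y")
          case True
          have "left_ideal Y" using XY CA by (auto simp: A_def)
          moreover have "x \<in> Y" using XY True by blast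
          ultimately have "x + y \<in> Y" using XY by (auto simp: left_ideal_def)
          thus ?thesis using XY by blast
        next
          case False hence "Y \<subseteq> X" using ch XY by blast
          have "left_ideal X" using XY CA by (auto simp: A_def)
          moreover have "y \<in> X" using XY \<open>Y \<subseteq> X\<close> by blast
          ultimately have "x + y \<in> X" using XY by (auto simp: left_ideal_def)
          thus ?thesis using XY by blast
        qed
      next
        fix x assume "x \<in> \<Union>C"
        then obtain X where "X \<in> C" "x \<in> X" by auto
        moreover have "left_ideal X" using \<open>X \<in> C\<close> CA by (auto simp: A_def)
        ultimately have "- x \<in> X" by (auto simp: left_ideal_def)
        thus "- x \<in> \<Union>C" using \<open>X \<in> C\<close> by blast
      next
        fix r x assume "x \<in> \<Union>C"
        then obtain X where "X \<in> C" "x \<in> X" by auto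
        moreover have "left_ideal X" using \<open>X \<in> C\<close> CA by (auto simp: A_def)
        ultimately have "r * x \<in> X" by (auto simp: left_ideal_def)
        thus "r * x \<in> \<Union>C" using \<open>X \<in> C\<close> by blast
      qed
      moreover have "I \<subseteq> \<Union>C" using False CA by (auto simp: A_def)
      moreover have "1 \<notin> \<Union>C" using CA by (auto simp: A_def)
      ultimately show ?thesis by (auto simp: A_def)
    qed
  qed
  from Zorn_Lemma2[OF this] obtain M where M: "M \<in> A" "\<forall>X\<in>A. M \<subseteq> X \<longrightarrow> X = M" by blast
  have "maximal_left_ideal M"
    unfolding maximal_left_ideal_def
  proof (intro conjI allI impI)
    show "left_ideal M" using M by (auto simp: A_def)
    show "M \<noteq> UNIV" using M by (auto simp: A_def)
    fix N assume N: "left_ideal N \<and> M \<subseteq> N"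
    show "N = M \<or> N = UNIV"
    proof (cases "1 \<in> N")
      case True thus ?thesis using left_ideal_UNIV_iff N by blast
    next
      case False
      hence "N \<in> A" using N M by (auto simp: A_def)
      thus ?thesis using M N by blast
    qed
  qed
  thus ?thesis using M by (auto simp: A_def)
qed

lemma left_ideal_J: "left_ideal (jacobson TYPE('a::ring_1))"
  unfolding jacobson_def left_ideal_def maximal_left_ideal_def by auto

lemma J_leftinv:
  assumes "x \<in> jacobson TYPE('a::ring_1)"
  shows "\<exists>y. y * (1 - x) = 1"
proof (rule ccontr)
  assume na: "\<nexists>y. y * (1 - x) = 1"
  define I where "I = {r * (1 - x) | r. True}"
  have "left_ideal I" unfolding left_ideal_def I_def
  proof (intro conjI ballI allI)
    show "0 \<in> {r * (1 - x) |r. True}" by (rule CollectI, rule exI[of _ 0]) simp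
    fix a b assume "a \<in> {r * (1 - x) |r. True}" "b \<in> {r * (1 - x) |r. True}"
    then obtain r s where "a = r * (1-x)" "b = s * (1-x)" by auto
    hence "a + b = (r + s) * (1 - x)" by (simp add: distrib_right)
    thus "a + b \<in> {r * (1 - x) |r. True}" by blast
  next
    fix a assume "a \<in> {r * (1 - x) |r. True}"
    then obtain r where "a = r * (1-x)" by auto
    hence "- a = (- r) * (1 - x)" by simp
    thus "- a \<in> {r * (1 - x) |r. True}" by blast
  next
    fix t a assume "a \<in> {r * (1 - x) |r. True}"
    then obtain r where "a = r * (1-x)" by auto
    hence "t * a = (t * r) * (1 - x)" by (simp add: mult.assoc)
    thus "t * a \<in> {r * (1 - x) |r. True}" by blast
  qed
  moreover have "1 \<notin> I" using na by (auto simp: I_def)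
  ultimately obtain M where M: "maximal_left_ideal M" "I \<subseteq> M" using exists_maximal by blast
  have "x \<in> M" using assms M by (auto simp: jacobson_def)
  moreover have "1 - x = 1 * (1 - x)" by simp
  hence "1 - x \<in> I" unfolding I_def by blast
  hence "1 - x \<in> M" using M(2) by blast
  moreover have "left_ideal M" using M by (simp add: maximal_left_ideal_def)
  ultimately have "(1 - x) + x \<in> M" unfolding left_ideal_def by blast
  hence "1 \<in> M" by simp
  thus False using M left_ideal_UNIV_iff by (auto simp: maximal_left_ideal_def)
qed

lemma colon_maximal:
  fixes M :: "'a::ring_1 set"
  assumes M: "maximal_left_ideal M" and r: "r \<notin> M"
  shows "maximal_left_ideal {y. y * r \<in> M}"
proof -
  have LM: "left_ideal M" using M by (simp add: maximal_left_ideal_def)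
  define Q where "Q = {y. y * r \<in> M}"
  have LQ: "left_ideal Q" using LM unfolding left_ideal_def Q_def
    by (auto simp: distrib_right mult.assoc)
  have "Q \<noteq> UNIV" using r by (metis Q_def UNIV_I mem_Collect_eq mult_1)
  moreover have "N = Q \<or> N = UNIV" if N: "left_ideal N" "Q \<subseteq> N" for N
  proof (cases "N = Q")
    case False
    then obtain y where y: "y \<in> N" "y \<notin> Q" using N by blast
    define L where "L = {m + s * (y * r) | m s. m \<in> M}"
    have LL: "left_ideal L" unfolding left_ideal_def L_def
    proof (intro conjI ballI allI)
      have "(0::'a) = 0 + 0 * (y * r)" by simp
      moreover have "0 \<in> M" using LM by (auto simp: left_ideal_def)
      ultimately show "0 \<in> {m + s * (y * r) |m s. m \<in> M}" by blast
      fix a b assume "a \<in> {m + s * (y * r) |m s. m \<in> M}" "b \<in> {m + s * (y * r) |m s. m \<in> M}"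
      then obtain m s m' s' where "a = m + s*(y*r)" "b = m' + s'*(y*r)" "m \<in> M" "m' \<in> M" by auto
      hence "a + b = (m + m') + (s + s') * (y * r)" by (simp add: algebra_simps)
      moreover have "m + m' \<in> M" using LM \<open>m \<in> M\<close> \<open>m' \<in> M\<close> by (auto simp: left_ideal_def)
      ultimately show "a + b \<in> {m + s * (y * r) |m s. m \<in> M}" by blast
    next
      fix a assume "a \<in> {m + s * (y * r) |m s. m \<in> M}"
      then obtain m s where "a = m + s*(y*r)" "m \<in> M" by auto
      hence "- a = (- m) + (- s) * (y * r)" by (simp add: algebra_simps)
      moreover have "- m \<in> M" using LM \<open>m \<in> M\<close> by (auto simp: left_ideal_def)
      ultimately show "- a \<in> {m + s * (y * r) |m s. m \<in> M}" by blast
    next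
      fix t a assume "a \<in> {m + s * (y * r) |m s. m \<in> M}"
      then obtain m s where "a = m + s*(y*r)" "m \<in> M" by auto
      hence "t * a = (t * m) + (t * s) * (y * r)" by (simp add: algebra_simps)
      moreover have "t * m \<in> M" using LM \<open>m \<in> M\<close> by (auto simp: left_ideal_def)
      ultimately show "t * a \<in> {m + s * (y * r) |m s. m \<in> M}" by blast
    qed
    have "M \<subseteq> L"
    proof
      fix m assume "m \<in> M"
      moreover have "m = m + 0 * (y * r)" by simp
      ultimately show "m \<in> L" unfolding L_def by blast
    qed
    moreover have "y * r \<in> L"
    proof -
      have "y * r = 0 + 1 * (y * r)" by simp
      moreover have "0 \<in> M" using LM by (auto simp: left_ideal_def)
      ultimately show ?thesis unfolding L_def by blast
    qed
    moreover have "y * r \<notin> M" using y by (auto simp: Q_def)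
    ultimately have "L = UNIV" using M LL by (metis maximal_left_ideal_def)
    have "a \<in> N" for a
    proof -
      have "a * r \<in> L" using \<open>L = UNIV\<close> by simp
      then obtain m s where ms: "a * r = m + s * (y*r)" "m \<in> M" by (auto simp: L_def)
      hence "(a - s * y) * r = m" by (simp add: algebra_simps)
      hence "a - s * y \<in> Q" using ms by (simp add: Q_def)
      hence "a - s * y \<in> N" using N by blast
      moreover have "s * y \<in> N" using N y by (auto simp: left_ideal_def)
      ultimately have "(a - s*y) + s*y \<in> N" using N(1) unfolding left_ideal_def by blast
      thus ?thesis by simp
    qed
    thus ?thesis by auto
  qed simp
  ultimately show ?thesis using LQ by (auto simp: maximal_left_ideal_def Q_def)
qed

lemma two_sided_J: "two_sided_ideal (jacobson TYPE('a::ring_1))"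
  unfolding two_sided_ideal_def
proof (intro conjI left_ideal_J allI ballI)
  fix r x assume x: "x \<in> jacobson TYPE('a)"
  show "x * r \<in> jacobson TYPE('a)"
    unfolding jacobson_def
  proof
    fix M assume "M \<in> {M::'a set. maximal_left_ideal M}"
    hence M: "maximal_left_ideal M" by simp
    hence LM: "left_ideal M" by (simp add: maximal_left_ideal_def)
    show "x * r \<in> M"
    proof (cases "r \<in> M")
      case True thus ?thesis using LM by (simp add: left_ideal_def)
    next
      case False
      hence "maximal_left_ideal {y. y * r \<in> M}" using colon_maximal M by blast
      hence "x \<in> {y. y * r \<in> M}" using x by (auto simp: jacobson_def)
      thus ?thesis by simp
    qed
  qed
qed

lemma comm_pow_mult:
  fixes a b :: "'a::ring_1"
  assumes "a * b = b * a"
  shows "(a * b) ^ k = a ^ k * b ^ k"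
proof (induction k)
  case (Suc k)
  have "(a * b) ^ Suc k = (a * b) * (a ^ k * b ^ k)" by (simp add: Suc)
  also have "\<dots> = a * (b * a ^ k) * b ^ k" by (simp add: mult.assoc)
  also have "b * a ^ k = a ^ k * b" using power_commuting_commutes[of a b k] assms by simp
  also have "a * (a ^ k * b) * b ^ k = a ^ Suc k * b ^ Suc k" by (simp add: mult.assoc)
  finally show ?case .
qed simp

lemma nil_leftinv:
  fixes x :: "'a::ring_1"
  assumes "x ^ k = 0"
  shows "\<exists>v. v * (1 - x) = 1"
proof -
  have "(\<Sum>i<m. x ^ i) * (1 - x) = 1 - x ^ m" for m
  proof (induction m)
    case (Suc m)
    have "(\<Sum>i<Suc m. x ^ i) * (1 - x) = (\<Sum>i<m. x ^ i) * (1 - x) + x ^ m * (1 - x)"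
      by (simp add: distrib_right)
    also have "\<dots> = 1 - x ^ Suc m" using Suc by (simp add: algebra_simps power_Suc2 power_commutes)
    finally show ?case .
  qed simp
  from this[of k] assms show ?thesis by auto
qed

lemma geo:
  fixes y :: "'a::ring_1"
  shows "(1 + y) ^ n = 1 + y * (\<Sum>i<n. (1 + y) ^ i)"
proof (induction n)
  case (Suc n)
  have "(1 + y) ^ Suc n = (1 + y) ^ n * (1 + y)" by (rule power_Suc2)
  also have "\<dots> = (1 + y) ^ n + (1 + y) ^ n * y" by (simp add: distrib_left)
  also have "(1 + y) ^ n * y = y * (1 + y) ^ n"
    by (rule power_commuting_commutes) (simp add: algebra_simps)
  also have "(1 + y) ^ n + y * (1 + y) ^ n = 1 + y * (\<Sum>i<Suc n. (1 + y) ^ i)"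
    using Suc by (simp add: algebra_simps)
  finally show ?case .
qed simp

lemma G_exp:
  fixes y :: "'a::ring_1"
  shows "(\<Sum>i<n. (1 + y) ^ i) = of_nat n + y * (\<Sum>i<n. \<Sum>l<i. (1 + y) ^ l)"
proof -
  have "(\<Sum>i<n. (1 + y) ^ i) = (\<Sum>i<n. 1 + y * (\<Sum>l<i. (1 + y) ^ l))"
    by (intro sum.cong refl) (rule geo)
  also have "\<dots> = of_nat n + y * (\<Sum>i<n. \<Sum>l<i. (1 + y) ^ l)"
    by (simp add: sum.distrib sum_distrib_left)
  finally show ?thesis .
qed

lemma W_comm:
  fixes y :: "'a::ring_1"
  shows "(\<Sum>i<n. \<Sum>l<i. (1 + y) ^ l) * y = y * (\<Sum>i<n. \<Sum>l<i. (1 + y) ^ l)"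
proof -
  have c: "(1 + y) ^ l * y = y * (1 + y) ^ l" for l
    by (rule power_commuting_commutes) (simp add: algebra_simps)
  show ?thesis by (simp add: sum_distrib_left sum_distrib_right c)
qed

lemma KEY:
  fixes y :: "'a::ring_1" and n :: nat and c :: int
  assumes pw: "(1 + y) ^ n = 1" and c: "of_nat n * of_int c = (1::'a)"
    and inv: "\<And>w. w * y = y * w \<Longrightarrow> \<exists>v. v * (1 + of_int c * w * y) = 1"
  shows "y = 0"
proof -
  define W where "W = (\<Sum>i<n. \<Sum>l<i. (1 + y) ^ l)"
  have Wc: "W * y = y * W" unfolding W_def by (rule W_comm)
  have "y * (of_nat n + y * W) = 0"
    using geo[of y n] G_exp[of y n] pw unfolding W_def by simp
  hence h1: "y * (of_nat n + y * W) = 0" .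
  have "(of_nat n + y * W) * y = of_nat n * y + y * (W * y)" by (simp add: distrib_right mult.assoc)
  also have "\<dots> = y * of_nat n + y * (y * W)" by (metis mult_of_nat_commute Wc)
  also have "\<dots> = y * (of_nat n + y * W)" by (simp only: distrib_left)
  finally have h2: "(of_nat n + y * W) * y = 0" using h1 by simp
  have c': "of_int c * of_nat n = (1::'a)" using c by (metis mult_of_int_commute)
  have "of_int c * (of_nat n + y * W) = of_int c * of_nat n + of_int c * (y * W)"
    by (simp only: distrib_left)
  also have "\<dots> = 1 + of_int c * W * y" using c' Wc by (simp add: mult.assoc)
  finally have h3: "of_int c * (of_nat n + y * W) = 1 + of_int c * W * y" .
  have e: "(1 + of_int c * W * y) * y = 0"
    unfolding h3[symmetric] using h2 by (simp add: mult.assoc)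
  obtain v where v: "v * (1 + of_int c * W * y) = 1" using inv[OF Wc] by blast
  have "y = v * (1 + of_int c * W * y) * y" using v by simp
  also have "\<dots> = 0" using e by (simp add: mult.assoc)
  finally show ?thesis .
qed

lemma binom_one:
  fixes x :: "'a::ring_1"
  shows "(1 + x) ^ k = (\<Sum>i\<le>k. of_nat (k choose i) * x ^ i)"
proof (induction k)
  case 0 thus ?case by simp
next
  case (Suc k)
  have "(1 + x) ^ Suc k = (1 + x) ^ k + (1 + x) ^ k * x"
    by (simp only: power_Suc2 distrib_left mult_1_right)
  also have "(1 + x) ^ k * x = (\<Sum>i\<le>k. of_nat (k choose i) * x ^ Suc i)"
    using Suc by (simp add: sum_distrib_right mult.assoc power_commutes)
  also have "(1 + x) ^ k = 1 + (\<Sum>i<k. of_nat (k choose Suc i) * x ^ Suc i)"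
    using Suc by (simp add: sum.atMost_shift)
  also have "(\<Sum>i\<le>Suc k. of_nat (Suc k choose i) * x ^ i)
     = 1 + (\<Sum>i\<le>k. of_nat (k choose i) * x ^ Suc i) + (\<Sum>i\<le>k. of_nat (k choose Suc i) * x ^ Suc i)"
    by (simp add: sum.atMost_Suc_shift sum.distrib distrib_right del: sum.atMost_Suc)
  moreover have "(\<Sum>i\<le>k. of_nat (k choose Suc i) * x ^ Suc i) = (\<Sum>i<k. of_nat (k choose Suc i) * (x::'a) ^ Suc i)"
    by (simp add: lessThan_Suc_atMost[symmetric] binomial_eq_0)
  ultimately show ?case by (simp add: algebra_simps)
qed

lemma frob:
  fixes x :: "'a::ring_1"
  assumes p: "prime p" and z: "of_nat p = (0::'a)"
  shows "(1 + x) ^ p = 1 + x ^ p"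
proof -
  have "(1 + x) ^ p = (\<Sum>i\<in>{0, p}. of_nat (p choose i) * x ^ i)"
    unfolding binom_one
  proof (rule sum.mono_neutral_right)
    show "finite {..p}" by simp
    show "{0, p} \<subseteq> {..p}" by auto
    show "\<forall>i\<in>{..p} - {0, p}. of_nat (p choose i) * x ^ i = 0"
    proof
      fix i assume i: "i \<in> {..p} - {0, p}"
      hence "p dvd (p choose i)" using p by (intro dvd_choose_prime) (auto simp: prime_gt_0_nat)
      then obtain q where "p choose i = p * q" by blast
      hence "(of_nat (p choose i) :: 'a) = 0" using z by simp
      thus "of_nat (p choose i) * x ^ i = 0" by simp
    qed
  qed
  also have "\<dots> = 1 + x ^ p" using p by (simp add: prime_gt_0_nat)
  finally show ?thesis .
qed

lemma frob_pow:
  fixes x :: "'a::ring_1"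
  assumes p: "prime p" and z: "of_nat p = (0::'a)"
  shows "(1 + x) ^ (p ^ a) = 1 + x ^ (p ^ a)"
proof (induction a)
  case (Suc a)
  have pp: "p ^ Suc a = p ^ a * p" by (rule power_Suc2)
  have "(1 + x) ^ (p ^ Suc a) = ((1 + x) ^ (p ^ a)) ^ p" by (simp only: pp power_mult)
  also have "\<dots> = (1 + x ^ (p ^ a)) ^ p" using Suc by simp
  also have "\<dots> = 1 + (x ^ (p ^ a)) ^ p" by (rule frob[OF p z])
  also have "\<dots> = 1 + x ^ (p ^ Suc a)" by (simp only: pp power_mult)
  finally show ?case .
qed simp

lemma of_int_mod_CHAR: "(of_int (k mod int CHAR('b)) :: 'b::ring_1) = of_int k"
proof -
  have "int CHAR('b) dvd k - k mod int CHAR('b)" by (simp add: minus_mod_eq_mult_div)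
  hence "(of_int (k - k mod int CHAR('b)) :: 'b) = 0" by (simp only: of_int_eq_0_iff_char_dvd)
  hence "(of_int k :: 'b) - of_int (k mod int CHAR('b)) = 0" by (simp only: of_int_diff)
  hence "(of_int k :: 'b) = of_int (k mod int CHAR('b))" by (simp only: right_minus_eq)
  thus ?thesis by (rule sym)
qed

lemma char_card:
  assumes pos: "CHAR('b::ring_1) > 0"
  shows "finite (range (of_int :: int \<Rightarrow> 'b)) \<and> card (range (of_int :: int \<Rightarrow> 'b)) = CHAR('b)"
proof -
  let ?C = "int CHAR('b)"
  have r: "range (of_int :: int \<Rightarrow> 'b) = of_int ` {0..<?C}"
  proof
    show "range (of_int :: int \<Rightarrow> 'b) \<subseteq> of_int ` {0..<?C}"
    proof
      fix z assume "z \<in> range (of_int :: int \<Rightarrow> 'b)"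
      then obtain k where "z = of_int k" by auto
      hence "z = of_int (k mod ?C)" by (simp add: of_int_mod_CHAR)
      moreover have "k mod ?C \<in> {0..<?C}" using pos by auto
      ultimately show "z \<in> of_int ` {0..<?C}" by blast
    qed
  qed auto
  have inj: "inj_on (of_int :: int \<Rightarrow> 'b) {0..<?C}"
  proof
    fix a b assume ab: "a \<in> {0..<?C}" "b \<in> {0..<?C}" "(of_int a :: 'b) = of_int b"
    hence "(of_int (a - b) :: 'b) = 0" by simp
    hence dv: "?C dvd a - b" by (simp only: of_int_eq_0_iff_char_dvd)
    have lt: "\<bar>a - b\<bar> < ?C" using ab by auto
    show "a = b"
    proof (rule ccontr)
      assume "a \<noteq> b"
      hence "a - b \<noteq> 0" by simp
      from dvd_imp_le_int[OF this dv] lt show False by simp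
    qed
  qed
  show ?thesis unfolding r using card_image[OF inj] by simp
qed

lemma ring_char_eq: "CHAR('b::ring_1) > 0 \<Longrightarrow> ring_char TYPE('b) = CHAR('b)"
  using char_card[where 'b='b] by (simp add: ring_char_def)

abbreviation DEC :: "nat \<Rightarrow> 'a::ring_1 \<Rightarrow> bool" where
  "DEC n r \<equiv> \<exists>e u. idempotent e \<and> unit_of u \<and> u ^ n = 1 \<and> e * u = u * e \<and> r = e + u"

lemma corner:
  fixes a b f :: "'a::ring_1"
  assumes "a * f = b * f" "b * f = f * b"
  shows "a ^ k * f = b ^ k * f"
proof (induction k)
  case (Suc k)
  have fb: "b ^ k * f = f * b ^ k" using power_commuting_commutes[of b f k] assms(2) by simp
  have "a ^ Suc k * f = a * (a ^ k * f)" by (simp add: mult.assoc)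
  also have "\<dots> = a * f * b ^ k" using Suc fb by (simp add: mult.assoc)
  also have "\<dots> = b * (f * b ^ k)" using assms(1) by (simp add: mult.assoc)
  also have "\<dots> = b ^ Suc k * f" using fb by (simp add: mult.assoc)
  finally show ?case .
qed simp

lemma identity_from_dec:
  fixes r :: "'a::ring_1"
  assumes "DEC n r"
  shows "(r ^ n - 1) * ((r - 1) ^ n - 1) = 0"
proof -
  obtain e u where eu: "e * e = e" "u ^ n = 1" "e * u = u * e" "r = e + u"
    using assms by (auto simp: idempotent_def)
  define f where "f = 1 - e"
  have rf: "r * f = u * f" unfolding f_def using eu by (simp add: algebra_simps)
  have uf: "u * f = f * u" unfolding f_def using eu by (simp add: algebra_simps)
  have "r ^ n * f = u ^ n * f" by (rule corner[OF rf uf])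
  hence A0: "(r ^ n - 1) * f = 0" using eu by (simp add: algebra_simps)
  have re: "(r - 1) * e = u * e" using eu by (simp add: algebra_simps)
  have ue: "u * e = e * u" using eu by simp
  have "(r - 1) ^ n * e = u ^ n * e" by (rule corner[OF re ue])
  hence B0: "((r - 1) ^ n - 1) * e = 0" using eu by (simp add: algebra_simps)
  have r1f: "(r - 1) * f = f * (r - 1)" unfolding f_def using eu by (simp add: algebra_simps)
  have Bf: "((r - 1) ^ n - 1) * f = f * ((r - 1) ^ n - 1)"
    using power_commuting_commutes[OF r1f, of n] by (simp add: algebra_simps)
  have "(r ^ n - 1) * ((r - 1) ^ n - 1) = (r ^ n - 1) * ((r - 1) ^ n - 1) * (e + f)"
    by (simp add: f_def)
  also have "\<dots> = (r ^ n - 1) * (((r - 1) ^ n - 1) * e) + (r ^ n - 1) * (((r - 1) ^ n - 1) * f)"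
    by (simp add: distrib_left mult.assoc)
  also have "\<dots> = 0" using B0 A0 Bf by (simp add: mult.assoc[symmetric])
  finally show ?thesis .
qed

lemma idem_pow: "(f::'a::ring_1) * f = f \<Longrightarrow> k \<ge> 1 \<Longrightarrow> f ^ k = f"
proof (induction k)
  case (Suc k) thus ?case by (cases k) (auto simp: mult.assoc)
qed simp

lemma dec_good:
  fixes y :: "'a::ring_1"
  assumes d: "DEC n y" and g: "y \<in> jacobson TYPE('a) \<or> (\<exists>k. y ^ k = 0)"
  shows "(y - 1) ^ n = 1"
proof -
  obtain e u where eu: "e * e = e" "unit_of u" "u ^ n = 1" "e * u = u * e" "y = e + u"
    using d by (auto simp: idempotent_def)
  obtain v where v: "u * v = 1" "v * u = 1" using eu(2) by (auto simp: unit_of_def)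
  define f where "f = 1 - e"
  have ff: "f * f = f" unfolding f_def using eu by (simp add: algebra_simps)
  have ve: "v * e = e * v"
  proof -
    have "v * e = v * e * (u * v)" using v by simp
    also have "\<dots> = v * (e * u) * v" by (simp add: mult.assoc)
    also have "\<dots> = v * (u * e) * v" using eu by simp
    also have "\<dots> = e * v" using v by (simp add: mult.assoc[symmetric])
    finally show ?thesis .
  qed
  have fe: "f * e = 0" unfolding f_def using eu by (simp add: algebra_simps)
  have fu: "f * u = u * f" unfolding f_def using eu by (simp add: algebra_simps)
  have yf: "y * f = u * f" unfolding f_def using eu by (simp add: algebra_simps)
  have fy: "f * y = y * f" unfolding f_def using eu by (simp add: algebra_simps)
  have key: "(v * f) * y = f"
  proof -
    have "(v * f) * y = v * (y * f)" using fy by (simp add: mult.assoc)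
    also have "\<dots> = v * u * f" using yf by (simp add: mult.assoc)
    finally show ?thesis using v by simp
  qed
  have "f = 0"
    using g
  proof
    assume yJ: "y \<in> jacobson TYPE('a)"
    have "f \<in> jacobson TYPE('a)" using key yJ left_ideal_J[where 'a='a]
      by (metis left_ideal_def)
    then obtain w where w: "w * (1 - f) = 1" using J_leftinv by blast
    have "f = w * (1 - f) * f" using w by simp
    also have "\<dots> = 0" using ff by (simp add: mult.assoc algebra_simps)
    finally show ?thesis .
  next
    assume "\<exists>k. y ^ k = 0"
    then obtain k where k: "y ^ k = 0" by blast
    have "k \<noteq> 0" using k by (metis power_0 one_neq_zero)
    have vfy: "(v * f) * y = y * (v * f)"
    proof -
      have vu: "v * u = u * v" using v by simp
      have vy: "v * y = y * v" using eu ve vu by (simp add: algebra_simps)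
      show ?thesis using vy fy by (metis mult.assoc)
    qed
    have "f = f ^ k" using idem_pow[OF ff] \<open>k \<noteq> 0\<close> by simp
    also have "\<dots> = ((v * f) * y) ^ k" using key by simp
    also have "\<dots> = (v * f) ^ k * y ^ k" by (rule comm_pow_mult[OF vfy])
    also have "\<dots> = 0" using k by simp
    finally show ?thesis .
  qed
  hence "e = 1" by (simp add: f_def)
  thus ?thesis using eu by simp
qed

lemma good_pow:
  fixes y :: "'a::ring_1"
  assumes d: "\<forall>r::'a. DEC n r" and g: "y \<in> jacobson TYPE('a) \<or> (\<exists>k. y ^ k = 0)"
  shows "(1 + y) ^ n = 1"
proof -
  have g': "- y \<in> jacobson TYPE('a) \<or> (\<exists>k. (- y) ^ k = 0)"
  proof (cases "y \<in> jacobson TYPE('a)")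
    case True thus ?thesis using left_ideal_J[where 'a='a] by (auto simp: left_ideal_def)
  next
    case False
    then obtain k where "y ^ k = 0" using g by blast
    hence "(- y) ^ k = 0" by (simp add: power_minus[of y])
    thus ?thesis by blast
  qed
  have a: "(- y - 1) ^ n = 1" using dec_good[OF _ g'] d by blast
  have "(0 - 1 :: 'a) ^ n = 1" using dec_good[of n "0::'a"] d by (metis power_one_right)
  hence m1: "(- 1 :: 'a) ^ n = 1" by simp
  have "(1 + y) ^ n = (- (- y - 1)) ^ n" by simp
  also have "\<dots> = 1" unfolding power_minus[of "- y - 1"] using a m1 by simp
  finally show ?thesis .
qed

lemma inv_nil:
  fixes x w :: "'a::ring_1"
  assumes "x ^ k = 0" "w * x = x * w"
  shows "\<exists>v. v * (1 + of_int c * w * x) = 1"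
proof -
  have c: "(of_int c * w) * x = x * (of_int c * w)" using assms(2)
    by (metis mult.assoc mult_of_int_commute)
  have "(of_int c * w * x) ^ k = 0" using comm_pow_mult[OF c, of k] assms(1) by simp
  hence "(- (of_int c * w * x)) ^ k = 0" by (simp add: power_minus[of "of_int c * w * x"])
  from nil_leftinv[OF this] show ?thesis by simp
qed

lemma inv_J:
  fixes x w :: "'a::ring_1"
  assumes "x \<in> jacobson TYPE('a)"
  shows "\<exists>v. v * (1 + of_int c * w * x) = 1"
proof -
  have "(- (of_int c * w)) * x \<in> jacobson TYPE('a)"
    using assms left_ideal_J[where 'a='a] by (simp add: left_ideal_def)
  hence "- (of_int c * w * x) \<in> jacobson TYPE('a)" by simp
  from J_leftinv[OF this] show ?thesis by simp
qed

lemma nil_index: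
  fixes I :: "'a::ring_1 set"
  assumes "two_sided_ideal I" "\<forall>r\<in>I. r ^ N = 0"
  shows "\<exists>k. nil_ideal_of_index I k \<and> k \<le> N"
proof -
  let ?P = "\<lambda>k. \<forall>r\<in>I. r ^ k = 0"
  define k where "k = (LEAST k. ?P k)"
  have "?P k" unfolding k_def by (rule LeastI[of ?P N]) (use assms in auto)
  moreover have "k \<le> N" unfolding k_def by (rule Least_le) (use assms in auto)
  moreover have "\<forall>m<k. \<not> ?P m" unfolding k_def using not_less_Least by blast
  ultimately show ?thesis using assms by (auto simp: nil_ideal_of_index_def)
qed

lemma J_pow:
  assumes "y \<in> jacobson TYPE('a::ring_1)" "d \<ge> 1"
  shows "y ^ d \<in> jacobson TYPE('a)"
proof -
  obtain d' where "d = Suc d'" using assms by (cases d) auto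
  hence "y ^ d = y ^ d' * y" by (simp only: power_Suc2)
  thus ?thesis using assms left_ideal_J[where 'a='a] by (simp add: left_ideal_def)
qed

lemma part3:
  fixes y :: "'a::ring_1"
  assumes d: "\<forall>r::'a. DEC n r" and n: "n \<ge> 1" and pos: "CHAR('a) > 0"
    and yJ: "y \<in> jacobson TYPE('a)"
  shows "y ^ (CHAR('a) ^ n - 1) = 0"
proof -
  let ?C = "CHAR('a)"
  define t where "t = 1 + y"
  have tn: "t ^ n = 1" unfolding t_def using good_pow[OF d] yJ by blast
  define F where "F = (\<lambda>c::nat \<Rightarrow> int. \<Sum>i<n. of_int (c i) * t ^ i)"
  define S where "S = range F"
  have add: "a + b \<in> S" if as: "a \<in> S" "b \<in> S" for a b
  proof -
    obtain c1 c2 where "a = F c1" "b = F c2" using as unfolding S_def by blast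
    hence "a + b = F (\<lambda>i. c1 i + c2 i)" by (simp add: F_def sum.distrib distrib_right)
    thus ?thesis by (simp add: S_def)
  qed
  have scal: "of_int z * a \<in> S" if as: "a \<in> S" for a z
  proof -
    obtain c1 where "a = F c1" using as unfolding S_def by blast
    hence "of_int z * a = F (\<lambda>i. z * c1 i)" by (simp add: F_def sum_distrib_left mult.assoc)
    thus ?thesis by (simp add: S_def)
  qed
  have zero: "0 \<in> S" using scal[of "F (\<lambda>_. 0)" 0] by (simp add: S_def)
  have tpow_lt: "t ^ m \<in> S" if "m < n" for m
  proof -
    have "F (\<lambda>i. if i = m then 1 else 0) = t ^ m"
      using that by (simp add: F_def if_distrib[of of_int] if_distrib[of "\<lambda>z. z * _"] cong: if_cong)
    thus ?thesis by (metis S_def rangeI)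
  qed
  have tpow: "t ^ m \<in> S" for m
  proof -
    have "t ^ m = (t ^ n) ^ (m div n) * t ^ (m mod n)"
      by (simp add: power_mult[symmetric] power_add[symmetric])
    thus ?thesis using tn tpow_lt[of "m mod n"] n by simp
  qed
  have sums: "(\<Sum>i\<le>k. g i) \<in> S" if "\<And>i. g i \<in> S" for g and k :: nat
    by (induction k) (use that add in auto)
  have ypow: "y ^ k \<in> S" for k
  proof -
    have yy: "y = - (1 + (- t))" by (simp add: t_def)
    have "y ^ k = (- (1 + (- t))) ^ k" by (subst yy) (rule refl)
    also have "\<dots> = (- 1) ^ k * (1 + (- t)) ^ k" by (rule power_minus)
    also have "\<dots> = (- 1) ^ k * (\<Sum>i\<le>k. of_nat (k choose i) * (- t) ^ i)"
      by (simp only: binom_one)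
    also have "\<dots> = of_int ((- 1) ^ k) * (\<Sum>i\<le>k. of_nat (k choose i) * (- t) ^ i)"
      by simp
    finally have yk: "y ^ k = of_int ((- 1) ^ k) * (\<Sum>i\<le>k. of_nat (k choose i) * (- t) ^ i)" .
    have "of_nat (k choose i) * (- t) ^ i \<in> S" for i
    proof -
      have eq: "of_nat (k choose i) * (- t) ^ i = of_int (int (k choose i) * (- 1) ^ i) * t ^ i"
        by (simp add: power_minus[of t] mult.assoc)
      show ?thesis unfolding eq by (rule scal[OF tpow])
    qed
    thus ?thesis unfolding yk by (intro scal sums)
  qed
  have finS: "finite S" and cardS: "card S \<le> ?C ^ n"
  proof -
    let ?P = "PiE {..<n} (\<lambda>_. {0..<int ?C})"
    have sub: "S \<subseteq> F ` ?P"
    proof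
      fix z assume "z \<in> S"
      then obtain c where z: "z = F c" by (auto simp: S_def)
      define c' where "c' = restrict (\<lambda>i. c i mod int ?C) {..<n}"
      have cP': "c' \<in> ?P" unfolding c'_def using pos by (simp add: restrict_PiE_iff)
      have Fc: "F c' = F c" unfolding F_def c'_def
        by (intro sum.cong refl) (simp add: of_int_mod_CHAR restrict_def)
      show "z \<in> F ` ?P"
      proof (rule image_eqI[where x=c'])
        show "z = F c'" using Fc z by simp
        show "c' \<in> ?P" by (rule cP')
      qed
    qed
    have fP: "finite ?P" by (intro finite_PiE) auto
    have cP: "card ?P = ?C ^ n" by (simp add: card_PiE)
    show "finite S" using sub fP finite_subset by blast
    show "card S \<le> ?C ^ n" using card_mono[OF finite_imageI[OF fP] sub] card_image_le[OF fP, of F] cP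
      by linarith
  qed
  let ?A = "{0..?C ^ n}"
  have "(\<lambda>k. y ^ k) ` ?A \<subseteq> S" using ypow by auto
  hence "card ((\<lambda>k. y ^ k) ` ?A) \<le> ?C ^ n" using card_mono[OF finS] cardS by (meson le_trans)
  hence "card ((\<lambda>k. y ^ k) ` ?A) < card ?A" by simp
  hence "\<not> inj_on (\<lambda>k. y ^ k) ?A" by (rule pigeonhole)
  then obtain a b where ab: "a \<in> ?A" "b \<in> ?A" "a \<noteq> b" "y ^ a = y ^ b"
    unfolding inj_on_def by blast
  have "\<exists>a b. a < b \<and> b \<le> ?C ^ n \<and> y ^ a = y ^ b"
  proof (cases "a < b")
    case True thus ?thesis using ab by auto
  next
    case False thus ?thesis using ab by (intro exI[of _ b] exI[of _ a]) auto
  qed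
  then obtain a b where ab: "a < b" "b \<le> ?C ^ n" "y ^ a = y ^ b" by blast
  define dd where "dd = b - a"
  have dd: "dd \<ge> 1" "b = a + dd" using ab by (auto simp: dd_def)
  have "(1 - y ^ dd) * y ^ a = y ^ a - y ^ (dd + a)" by (simp add: left_diff_distrib power_add)
  also have "\<dots> = 0" using ab dd by (simp add: add.commute)
  finally have e0: "(1 - y ^ dd) * y ^ a = 0" .
  obtain w where w: "w * (1 - y ^ dd) = 1" using J_leftinv[OF J_pow[OF yJ dd(1)]] by blast
  have ya: "y ^ a = 0" using e0 w by (metis mult.assoc mult_1 mult_zero_right)
  have "a \<le> ?C ^ n - 1" using ab by linarith
  hence eq: "?C ^ n - 1 = a + (?C ^ n - 1 - a)" by simp
  have "y ^ (?C ^ n - 1) = y ^ (a + (?C ^ n - 1 - a))" using eq by (rule arg_cong)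
  also have "\<dots> = y ^ a * y ^ (?C ^ n - 1 - a)" by (rule power_add)
  also have "\<dots> = 0" using ya by simp
  finally show ?thesis .
qed

lemma phi_of_int:
  fixes phi :: "'f::field \<Rightarrow> 'a::ring_1"
  assumes "algebra_structure phi"
  shows "phi (of_int k) = of_int k"
proof -
  have add: "\<And>a b. phi (a + b) = phi a + phi b" and one: "phi 1 = 1"
    using assms by (auto simp: algebra_structure_def)
  have z: "phi 0 = 0" using add[of 0 0] by simp
  have neg: "phi (- a) = - phi a" for a using add[of a "- a"] z by (metis add.right_inverse neg_eq_iff_add_eq_0)
  have nat: "phi (of_nat m) = of_nat m" for m
    by (induction m) (simp_all add: z add one)
  show ?thesis
  proof (cases "k \<ge> 0")
    case True
    then obtain m where "k = int m" by (metis nonneg_eq_int)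
    thus ?thesis using nat by simp
  next
    case False
    then obtain m where "k = - int m" by (metis neg_0_le_iff_le nonneg_eq_int nle_le minus_minus)
    thus ?thesis using nat neg by simp
  qed
qed

lemma phi_zero_iff:
  fixes phi :: "'f::field \<Rightarrow> 'a::ring_1"
  assumes "algebra_structure phi"
  shows "phi a = 0 \<longleftrightarrow> a = 0"
proof
  assume pa: "phi a = 0"
  show "a = 0"
  proof (rule ccontr)
    assume "a \<noteq> 0"
    hence "phi (a * inverse a) = 1" using assms by (simp add: algebra_structure_def)
    thus False using pa assms by (simp add: algebra_structure_def)
  qed
next
  assume "a = 0"
  thus "phi a = 0" using phi_of_int[OF assms, of 0] by simp
qed

lemma CHAR_eq_phi:
  fixes phi :: "'f::field \<Rightarrow> 'a::ring_1"
  assumes "algebra_structure phi"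
  shows "CHAR('f) = CHAR('a)"
proof -
  have iff: "(of_nat m :: 'f) = 0 \<longleftrightarrow> (of_nat m :: 'a) = 0" for m
    using phi_zero_iff[OF assms, of "of_nat m"] phi_of_int[OF assms, of "int m"] by simp
  have "CHAR('f) dvd CHAR('a)" using iff[of "CHAR('a)"] by (simp add: of_nat_eq_0_iff_char_dvd)
  moreover have "CHAR('a) dvd CHAR('f)" using iff[of "CHAR('f)"] by (simp add: of_nat_eq_0_iff_char_dvd)
  ultimately show ?thesis by (rule dvd_antisym)
qed

lemma reduced_of_unit:
  fixes x :: "'a::ring_1"
  assumes d: "\<forall>r::'a. DEC n r" and c: "of_nat n * of_int c = (1::'a)" and x: "x ^ k = 0"
  shows "x = 0"
proof (rule KEY[of x n c])
  show "(1 + x) ^ n = 1" using good_pow[OF d] x by blast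
  show "of_nat n * of_int c = (1::'a)" by (rule c)
  fix w assume "w * x = x * w"
  thus "\<exists>v. v * (1 + of_int c * w * x) = 1" using inv_nil[OF x] by blast
qed

lemma J_zero_of_unit:
  fixes x :: "'a::ring_1"
  assumes d: "\<forall>r::'a. DEC n r" and c: "of_nat n * of_int c = (1::'a)" and x: "x \<in> jacobson TYPE('a)"
  shows "x = 0"
proof (rule KEY[of x n c])
  show "(1 + x) ^ n = 1" using good_pow[OF d] x by blast
  show "of_nat n * of_int c = (1::'a)" by (rule c)
  fix w assume "w * x = x * w"
  thus "\<exists>v. v * (1 + of_int c * w * x) = 1" using inv_J[OF x] by blast
qed

lemma abelian_of_reduced:
  assumes "\<forall>x::'a::ring_1. x * x = 0 \<longrightarrow> x = 0"
  shows "abelian_ring TYPE('a)"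
  unfolding abelian_ring_def idempotent_def
proof (intro allI impI)
  fix e x :: 'a assume ee: "e * e = e"
  have z1: "(e * x * (1 - e)) * (e * x * (1 - e)) = 0"
  proof -
    have "(1 - e) * e = 0" using ee by (simp add: algebra_simps)
    thus ?thesis by (metis mult.assoc mult_zero_left mult_zero_right)
  qed
  have z2: "((1 - e) * x * e) * ((1 - e) * x * e) = 0"
  proof -
    have "e * (1 - e) = 0" using ee by (simp add: algebra_simps)
    thus ?thesis by (metis mult.assoc mult_zero_left mult_zero_right)
  qed
  have "e * x * (1 - e) = 0" using assms z1 by blast
  hence a: "e * x = e * x * e" using ee by (simp add: algebra_simps)
  have "(1 - e) * x * e = 0" using assms z2 by blast
  hence b: "x * e = e * x * e" using ee by (simp add: algebra_simps)
  from a b show "e * x = x * e" by metis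
qed

lemma unit_of_coprime:
  assumes "coprime (CHAR('a::ring_1)) m"
  shows "\<exists>c. of_nat m * of_int c = (1::'a)"
proof -
  obtain u v :: int where uv: "u * int CHAR('a) + v * int m = gcd (int CHAR('a)) (int m)"
    using bezout_int by blast
  hence "u * int CHAR('a) + v * int m = 1" using assms by (simp add: coprime_iff_gcd_eq_1[symmetric] gcd_int_def)
  hence "(of_int (u * int CHAR('a) + v * int m) :: 'a) = 1" by simp
  hence "of_nat m * of_int v = (1::'a)" by (simp add: mult_of_int_commute)
  thus ?thesis by blast
qed

theorem theorem2p4:
  fixes n :: nat
  assumes "strongly_n_torsion_clean n TYPE('a::ring_1)"
  shows "(\<forall>r::'a. (r ^ n - 1) * ((r - 1) ^ n - 1) = 0)
    \<and> finite (range (of_int :: int \<Rightarrow> 'a))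
    \<and> (\<exists>k. nil_ideal_of_index (jacobson TYPE('a)) k \<and> k < ring_char TYPE('a) ^ n)
    \<and> (odd n \<longrightarrow> reduced_ring TYPE('a) \<and> ring_char TYPE('a) = 2 \<and> jacobson TYPE('a) = {0})
    \<and> (\<forall>phi :: 'f::field \<Rightarrow> 'a. algebra_structure phi \<longrightarrow>
         (\<exists>k. nil_ideal_of_index (jacobson TYPE('a)) k \<and> k \<le> n)
         \<and> (abelian_ring TYPE('a) \<or> ring_char TYPE('f) dvd n))"
proof -
  have n1: "n \<ge> 1" and d: "\<forall>r::'a. DEC n r"
    using assms by (auto simp: strongly_n_torsion_clean_def has_strong_torsion_clean_decomps_def)
  have P1: "\<forall>r::'a. (r ^ n - 1) * ((r - 1) ^ n - 1) = 0"
    using identity_from_dec d by blast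
  define M :: int where "M = (3 ^ n - 1) * (2 ^ n - 1)"
  have Mpos: "M > 0"
  proof -
    have "(3::int) ^ n \<ge> 3" using n1 by (metis power_one_right power_increasing zero_le_numeral one_le_numeral)
    moreover have "(2::int) ^ n \<ge> 2" using n1 by (metis power_one_right power_increasing zero_le_numeral one_le_numeral)
    ultimately show ?thesis unfolding M_def by simp
  qed
  have M0: "(of_int M :: 'a) = 0"
  proof -
    have "((3::'a) ^ n - 1) * ((3 - 1) ^ n - 1) = 0" using P1 by blast
    moreover have "(3::'a) - 1 = 2" by simp
    ultimately show ?thesis unfolding M_def by simp
  qed
  have pos: "CHAR('a) > 0"
  proof -
    have "(of_nat (nat M) :: 'a) = 0" using M0 Mpos by simp
    thus ?thesis using Mpos CHAR_pos_iff by (metis zero_less_nat_eq)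
  qed
  have P2: "finite (range (of_int :: int \<Rightarrow> 'a))" using char_card[OF pos] by blast
  have rc: "ring_char TYPE('a) = CHAR('a)" by (rule ring_char_eq[OF pos])
  have P3: "\<exists>k. nil_ideal_of_index (jacobson TYPE('a)) k \<and> k < ring_char TYPE('a) ^ n"
  proof -
    have "\<forall>y\<in>jacobson TYPE('a). y ^ (CHAR('a) ^ n - 1) = 0" using part3[OF d n1 pos] by blast
    then obtain k where k: "nil_ideal_of_index (jacobson TYPE('a)) k" "k \<le> CHAR('a) ^ n - 1"
      using nil_index[OF two_sided_J] by blast
    have "CHAR('a) ^ n > 0" using pos by simp
    hence "k < CHAR('a) ^ n" using k(2) by linarith
    thus ?thesis using k rc by (intro exI[of _ k]) auto
  qed
  have P4: "odd n \<longrightarrow> reduced_ring TYPE('a) \<and> ring_char TYPE('a) = 2 \<and> jacobson TYPE('a) = {0}"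
  proof
    assume odd: "odd n"
    have "((0::'a) ^ n - 1) * ((0 - 1) ^ n - 1) = 0" using P1 by blast
    hence two: "(2::'a) = 0" using odd n1 by (simp add: zero_power)
    hence "(of_nat 2 :: 'a) = 0" by simp
    hence "CHAR('a) dvd 2" by (simp only: of_nat_eq_0_iff_char_dvd)
    hence "CHAR('a) \<le> 2" by (rule dvd_imp_le) simp
    moreover have "CHAR('a) \<noteq> 1" by simp
    ultimately have C2: "CHAR('a) = 2" using pos by linarith
    obtain q where "n = 2 * q + 1" using odd oddE by blast
    hence cn: "of_nat n * of_int 1 = (1::'a)" using two by simp
    have "reduced_ring TYPE('a)" unfolding reduced_ring_def using reduced_of_unit[OF d cn] by blast
    moreover have "jacobson TYPE('a) = {0}"
    proof
      show "jacobson TYPE('a) \<subseteq> {0}" using J_zero_of_unit[OF d cn] by blast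
      show "{0} \<subseteq> jacobson TYPE('a)" using left_ideal_J[where 'a='a] by (simp add: left_ideal_def)
    qed
    ultimately show "reduced_ring TYPE('a) \<and> ring_char TYPE('a) = 2 \<and> jacobson TYPE('a) = {0}"
      using rc C2 by simp
  qed
  have P5: "\<forall>phi :: 'f::field \<Rightarrow> 'a. algebra_structure phi \<longrightarrow>
         (\<exists>k. nil_ideal_of_index (jacobson TYPE('a)) k \<and> k \<le> n)
         \<and> (abelian_ring TYPE('a) \<or> ring_char TYPE('f) dvd n)"
  proof (intro allI impI)
    fix phi :: "'f \<Rightarrow> 'a" assume phi: "algebra_structure phi"
    let ?C = "CHAR('a)"
    have CF: "CHAR('f) = ?C" by (rule CHAR_eq_phi[OF phi])
    have posF: "CHAR('f) > 0" using CF pos by simp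
    have pr: "prime ?C" using prime_CHAR_semidom[OF posF] CF by simp
    have rcF: "ring_char TYPE('f) = ?C" using ring_char_eq[OF posF] CF by simp
    have nu: "\<not> is_unit ?C" using pr not_prime_unit by blast
    have nz: "n \<noteq> 0" using n1 by simp
    obtain m where nm: "n = ?C ^ multiplicity ?C n * m" "\<not> ?C dvd m"
      using multiplicity_decompose'[OF nz nu] by blast
    define a where "a = multiplicity ?C n"
    have nm': "n = ?C ^ a * m" using nm by (simp add: a_def)
    have "coprime ?C m" using pr nm(2) by (simp add: prime_imp_coprime)
    then obtain c where c: "of_nat m * of_int c = (1::'a)" using unit_of_coprime by blast
    have m0: "m \<noteq> 0" using nm' nz by (cases m) auto
    have "?C ^ a * 1 \<le> ?C ^ a * m" using m0 by (intro mult_le_mono2) simp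
    hence pa: "?C ^ a \<le> n" using nm' by simp
    have J: "y ^ n = 0" if yJ: "y \<in> jacobson TYPE('a)" for y
    proof -
      have yn: "(1 + y) ^ n = 1" using good_pow[OF d] yJ by blast
      have fr: "(1 + y) ^ (?C ^ a) = 1 + y ^ (?C ^ a)" using frob_pow[OF pr of_nat_CHAR] by blast
      have "(1 + y ^ (?C ^ a)) ^ m = 1"
        using yn unfolding fr[symmetric] power_mult[symmetric] nm'[symmetric] .
      moreover have yaJ: "y ^ (?C ^ a) \<in> jacobson TYPE('a)"
        using J_pow[OF yJ] pos by simp
      ultimately have ya: "y ^ (?C ^ a) = 0"
        using KEY[of "y ^ (?C ^ a)" m c] c inv_J[OF yaJ] by blast
      have "y ^ n = y ^ (?C ^ a) * y ^ (n - ?C ^ a)" using pa by (simp add: power_add[symmetric])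
      thus ?thesis using ya by simp
    qed
    have i: "\<exists>k. nil_ideal_of_index (jacobson TYPE('a)) k \<and> k \<le> n"
      using nil_index[OF two_sided_J] J by blast
    have ii: "abelian_ring TYPE('a) \<or> ring_char TYPE('f) dvd n"
    proof (cases "?C dvd n")
      case True thus ?thesis using rcF by simp
    next
      case False
      hence "coprime ?C n" using pr by (simp add: prime_imp_coprime)
      then obtain c' where c': "of_nat n * of_int c' = (1::'a)" using unit_of_coprime by blast
      have "\<forall>x::'a. x * x = 0 \<longrightarrow> x = 0"
      proof (intro allI impI)
        fix x :: 'a assume "x * x = 0"
        hence "x ^ 2 = 0" by (simp add: power2_eq_square)
        thus "x = 0" using reduced_of_unit[OF d c'] by blast
      qed
      thus ?thesis using abelian_of_reduced by blast
    qed
    show "(\<exists>k. nil_ideal_of_index (jacobson TYPE('a)) k \<and> k \<le> n)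
         \<and> (abelian_ring TYPE('a) \<or> ring_char TYPE('f) dvd n)" using i ii by blast
  qed
  show ?thesis using P1 P2 P3 P4 P5 by blast
qed

end
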